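(* Let $T$ be a binary search tree whose nodes are labelled with integers in $\{1,\dots,t\}$ so that no node has an ancestor with a label greater than its own label. For $j \in \{1,\dots,t\}$, let $L_j$ be the set of nodes with label $j$. Assume $|L_j| = 2^{2^j}$ for $j<t$ and $|L_t| \le 2^{2^t}$. Assume also that every maximal connected subtree $T'$ of $T$ consisting of nodes of a single layer $L_j$ is balanced, in the sense that every node of $T'$ has depth within $T'$ at most $O(\lg |T'|)$ (for instance, $T'$ is a red-black tree). Then every node $x \in L_j$ has depth $O(2^j)$ in $T$.
   Context: $\lg x := \log_2(x+2)$. The maximal connected single-layer subtrees are called layer-subtrees. The constant in the balance condition is uniform over all layer-subtrees. *)

theory Defs
  imports Complex_Main "HOL-Library.Tree" "HOL-Library.Sublist"
begin

definition lg :: "real \<Rightarrow> real" where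
  "lg x = log 2 (x + 2)"

text \<open>Nodes of a tree are identified with their positions: paths from the root
  (False = go left, True = go right). The depth of a node is the length of its path.\<close>
fun subtree_at :: "'a tree \<Rightarrow> bool list \<Rightarrow> 'a tree" where
  "subtree_at t [] = t"
| "subtree_at Leaf (b # bs) = Leaf"
| "subtree_at (Node l x r) (b # bs) = subtree_at (if b then r else l) bs"

definition positions :: "'a tree \<Rightarrow> bool list set" where
  "positions t = {p. subtree_at t p \<noteq> Leaf}"

definition lab :: "('k \<times> nat) tree \<Rightarrow> bool list \<Rightarrow> nat" where
  "lab t p = snd (value (subtree_at t p))"

definition layer :: "('k \<times> nat) tree \<Rightarrow> nat \<Rightarrow> bool list set" where
  "layer t j = {p \<in> positions t. lab t p = j}"

definition is_layer_root :: "('k \<times> nat) tree \<Rightarrow> bool list \<Rightarrow> bool" where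
  "is_layer_root t r \<longleftrightarrow> r \<in> positions t \<and> (r = [] \<or> lab t (butlast r) \<noteq> lab t r)"

text \<open>The layer-subtree (maximal connected single-layer subtree) rooted at r.\<close>
definition layer_subtree :: "('k \<times> nat) tree \<Rightarrow> bool list \<Rightarrow> bool list set" where
  "layer_subtree t r = {p \<in> positions t. prefix r p \<and>
      (\<forall>q. prefix r q \<and> prefix q p \<longrightarrow> lab t q = lab t r)}"

end

theory Submission
  imports Defs
begin

lemma subtree_at_Leaf[simp]: "subtree_at Leaf s = Leaf"
  by (cases s) auto

lemma subtree_at_append: "subtree_at t (q @ s) = subtree_at (subtree_at t q) s"
proof (induction q arbitrary: t)
  case Nil then show ?case by simp
next
  case (Cons b q) then show ?case by (cases t) auto
qed

lemma pos_prefix: "p \<in> positions t \<Longrightarrow> prefix q p \<Longrightarrow> q \<in> positions t"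
  unfolding positions_def prefix_def
  by (auto simp: subtree_at_append)

lemma pos_length: "subtree_at t p \<noteq> Leaf \<Longrightarrow> length p < height t"
proof (induction p arbitrary: t)
  case Nil then show ?case by (cases t) auto
next
  case (Cons b p) then show ?case
    by (cases t) (auto split: if_splits, fastforce+)
qed

lemma finite_positions: "finite (positions t)"
proof -
  have "positions t \<subseteq> {xs. set xs \<subseteq> (UNIV::bool set) \<and> length xs \<le> height t}"
    using pos_length unfolding positions_def by fastforce
  moreover have "finite {xs. set xs \<subseteq> (UNIV::bool set) \<and> length xs \<le> height t}"
    by (rule finite_lists_length_le) simp
  ultimately show ?thesis by (rule finite_subset)
qed

lemma lg_bound:
  assumes "real n \<le> 2 ^ (2 ^ j)"
  shows "lg (real n) \<le> 2 ^ j + 1" and "0 \<le> lg (real n)"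
proof -
  have two: "(2::real) \<le> 2 ^ (2 ^ j)"
    by (metis one_le_numeral one_le_power power_one_right power_increasing_iff
        le_numeral_extra(4) numeral_le_iff one_le_power self_le_power le_refl
        less_numeral_extra(1) pos2 zero_less_power nat_one_le_power) 
  have "real n + 2 \<le> 2 * (2::real) ^ (2 ^ j)" using assms two by linarith
  then have "real n + 2 \<le> (2::real) ^ (2 ^ j + 1)" by simp
  then have "log 2 (real n + 2) \<le> log 2 ((2::real) ^ (2 ^ j + 1))"
    by (intro log_mono) auto
  moreover have "log 2 ((2::real) ^ (2 ^ j + 1)) = (2::real) ^ j + 1"
    using log_pow_cancel[of "2::real" "2^j+1"] by simp
  ultimately show "lg (real n) \<le> 2 ^ j + 1" unfolding lg_def by linarith
  show "0 \<le> lg (real n)" unfolding lg_def by simp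
qed

lemma aux1: "0 \<le> c \<Longrightarrow> 1 \<le> (x::real) \<Longrightarrow> (2+4*c)*x + 1 + c*(2*x+1) \<le> (2+4*c)*(2*x)"
proof -
  assume a: "0 \<le> c" "1 \<le> x"
  have "c \<le> c*x" using mult_left_mono[of 1 x c] a by simp
  moreover have "(2+4*c)*(2*x) - ((2+4*c)*x + 1 + c*(2*x+1)) = 2*x + 2*(c*x) - 1 - c" by algebra
  ultimately show ?thesis using a by linarith
qed

lemma aux2: "0 \<le> c \<Longrightarrow> 1 \<le> (x::real) \<Longrightarrow> c*(2*x+1) \<le> (2+4*c)*(2*x)"
proof -
  assume a: "0 \<le> c" "1 \<le> x"
  have "c \<le> c*x" using mult_left_mono[of 1 x c] a by simp
  moreover have "(2+4*c)*(2*x) - c*(2*x+1) = 4*x + 6*(c*x) - c" by algebra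
  ultimately show ?thesis using a by linarith
qed

theorem lemma1:
  shows "\<forall>c::real. \<exists>C::real. \<forall>(T :: ('k::linorder \<times> nat) tree) (t::nat).
    bst_wrt (\<lambda>x y. fst x < fst y) T
    \<and> (\<forall>p\<in>positions T. 1 \<le> lab T p \<and> lab T p \<le> t)
    \<and> (\<forall>p\<in>positions T. \<forall>q. strict_prefix q p \<longrightarrow> lab T q \<le> lab T p)
    \<and> (\<forall>j. 1 \<le> j \<and> j < t \<longrightarrow> card (layer T j) = 2 ^ (2 ^ j))
    \<and> card (layer T t) \<le> 2 ^ (2 ^ t)
    \<and> (\<forall>r. is_layer_root T r \<longrightarrow> (\<forall>p\<in>layer_subtree T r.
          real (length p - length r) \<le> c * lg (real (card (layer_subtree T r)))))
    \<longrightarrow> (\<forall>p\<in>positions T. real (length p) \<le> C * 2 ^ (lab T p))"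
proof (intro allI)
  fix c :: real
  define c' where "c' = max c 0"
  have c'0: "0 \<le> c'" and cc': "c \<le> c'" unfolding c'_def by auto
  define K where "K = 2 + 4 * c'"
  show "\<exists>C::real. \<forall>(T :: ('k::linorder \<times> nat) tree) (t::nat).
    bst_wrt (\<lambda>x y. fst x < fst y) T
    \<and> (\<forall>p\<in>positions T. 1 \<le> lab T p \<and> lab T p \<le> t)
    \<and> (\<forall>p\<in>positions T. \<forall>q. strict_prefix q p \<longrightarrow> lab T q \<le> lab T p)
    \<and> (\<forall>j. 1 \<le> j \<and> j < t \<longrightarrow> card (layer T j) = 2 ^ (2 ^ j))
    \<and> card (layer T t) \<le> 2 ^ (2 ^ t)
    \<and> (\<forall>r. is_layer_root T r \<longrightarrow> (\<forall>p\<in>layer_subtree T r.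
          real (length p - length r) \<le> c * lg (real (card (layer_subtree T r)))))
    \<longrightarrow> (\<forall>p\<in>positions T. real (length p) \<le> C * 2 ^ (lab T p))"
  proof (intro exI[of _ K] allI impI)
    fix T :: "('k::linorder \<times> nat) tree" and t :: nat
    assume H: "bst_wrt (\<lambda>x y. fst x < fst y) T
    \<and> (\<forall>p\<in>positions T. 1 \<le> lab T p \<and> lab T p \<le> t)
    \<and> (\<forall>p\<in>positions T. \<forall>q. strict_prefix q p \<longrightarrow> lab T q \<le> lab T p)
    \<and> (\<forall>j. 1 \<le> j \<and> j < t \<longrightarrow> card (layer T j) = 2 ^ (2 ^ j))
    \<and> card (layer T t) \<le> 2 ^ (2 ^ t)
    \<and> (\<forall>r. is_layer_root T r \<longrightarrow> (\<forall>p\<in>layer_subtree T r.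
          real (length p - length r) \<le> c * lg (real (card (layer_subtree T r)))))"
    then have labs: "\<And>p. p\<in>positions T \<Longrightarrow> 1 \<le> lab T p \<and> lab T p \<le> t"
      and mono: "\<And>p q. p\<in>positions T \<Longrightarrow> strict_prefix q p \<Longrightarrow> lab T q \<le> lab T p"
      and card1: "\<And>j. 1 \<le> j \<Longrightarrow> j < t \<Longrightarrow> card (layer T j) = 2 ^ (2 ^ j)"
      and card2: "card (layer T t) \<le> 2 ^ (2 ^ t)"
      and bal: "\<And>r p. is_layer_root T r \<Longrightarrow> p\<in>layer_subtree T r \<Longrightarrow>
          real (length p - length r) \<le> c * lg (real (card (layer_subtree T r)))"
      by blast+
    have mono': "lab T q \<le> lab T p" if "p\<in>positions T" "prefix q p" for p q
      using mono[OF that(1)] that(2) by (cases "q = p") (auto simp: strict_prefix_def)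
    have main: "p \<in> positions T \<Longrightarrow> real (length p) \<le> K * 2 ^ (lab T p)" for p
    proof (induction p rule: measure_induct_rule[of length])
      case (less p)
      define j where "j = lab T p"
      have j1: "1 \<le> j" and jt: "j \<le> t" using labs[OF less.prems] j_def by auto
      define k where "k = (LEAST k. lab T (take k p) = j)"
      have ex: "lab T (take (length p) p) = j" using j_def by simp
      have rk: "lab T (take k p) = j" unfolding k_def by (rule LeastI[of "\<lambda>k. lab T (take k p) = j", OF ex])
      have kle: "k \<le> length p" unfolding k_def by (rule Least_le[of "\<lambda>k. lab T (take k p) = j", OF ex])
      define r where "r = take k p"
      have rp: "prefix r p" unfolding r_def by (rule take_is_prefix)
      have rpos: "r \<in> positions T" using pos_prefix[OF less.prems rp] .
      have labr: "lab T r = j" using rk r_def by simp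
      have lenr: "length r = k" using kle r_def by simp
      have butl: "r \<noteq> [] \<Longrightarrow> lab T (butlast r) \<noteq> j"
      proof -
        assume "r \<noteq> []"
        then have "k > 0" using lenr by auto
        have "butlast r = take (k - 1) p" unfolding r_def by (simp add: butlast_take kle)
        moreover have "lab T (take (k-1) p) \<noteq> j"
          using not_less_Least[of "k-1" "\<lambda>k. lab T (take k p) = j"] \<open>k>0\<close> k_def by simp
        ultimately show ?thesis by simp
      qed
      have root: "is_layer_root T r" unfolding is_layer_root_def using rpos butl labr by auto
      have pin: "p \<in> layer_subtree T r"
        unfolding layer_subtree_def
      proof (intro CollectI conjI allI impI)
        fix q assume q: "prefix r q \<and> prefix q p"
        have qpos: "q \<in> positions T" using pos_prefix[OF less.prems] q by blast
        have "lab T r \<le> lab T q" using mono'[OF qpos] q by blast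
        moreover have "lab T q \<le> lab T p" using mono'[OF less.prems] q by blast
        ultimately show "lab T q = lab T r" using labr j_def by simp
      qed (use less.prems rp in auto)
      have sub: "layer_subtree T r \<subseteq> layer T j"
        unfolding layer_subtree_def layer_def using labr by auto
      have fin: "finite (layer T j)"
        using finite_positions[of T] unfolding layer_def by simp
      have "card (layer_subtree T r) \<le> card (layer T j)" by (rule card_mono[OF fin sub])
      also have "card (layer T j) \<le> 2 ^ (2 ^ j)"
        using card1[OF j1] card2 jt by (cases "j < t") auto
      finally have "real (card (layer_subtree T r)) \<le> 2 ^ (2 ^ j)"
        by (metis of_nat_le_iff of_nat_numeral of_nat_power)
      note lgb = lg_bound[OF this]
      have "real (length p - length r) \<le> c * lg (real (card (layer_subtree T r)))"
        by (rule bal[OF root pin])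
      also have "\<dots> \<le> c' * lg (real (card (layer_subtree T r)))"
        using cc' lgb(2) by (simp add: mult_right_mono)
      also have "\<dots> \<le> c' * (2 ^ j + 1)"
        using c'0 lgb(1) by (simp add: mult_left_mono)
      finally have seg: "real (length p) - real (length r) \<le> c' * (2 ^ j + 1)"
        using kle lenr by (simp add: of_nat_diff)
      have pj: "(2::real) ^ j = 2 * 2 ^ (j - 1)" using j1
        by (metis Suc_diff_le diff_Suc_1 power_Suc)
      have x1: "(1::real) \<le> 2 ^ (j - 1)" by simp
      have cx: "c' \<le> c' * 2 ^ (j - 1)" using mult_left_mono[OF x1 c'0] by simp
      show ?case
      proof (cases "r = []")
        case True
        then have "real (length p) \<le> c' * (2 ^ j + 1)" using seg by simp
        also have "\<dots> \<le> K * 2 ^ j" unfolding K_def pj using aux2[OF c'0 x1] .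
        finally show ?thesis using j_def by simp
      next
        case False
        define q where "q = butlast r"
        have lq: "length r = length q + 1" using False q_def by simp
        have qp: "prefix q r" unfolding q_def by (rule prefixeq_butlast)
        have qpos: "q \<in> positions T" using pos_prefix[OF rpos qp] .
        have "strict_prefix q r" using qp lq by (auto simp: strict_prefix_def)
        then have "lab T q \<le> j" using mono[OF rpos] labr by simp
        moreover have "lab T q \<noteq> j" using butl False q_def by simp
        ultimately have lqj: "lab T q \<le> j - 1" by simp
        have "length q < length p" using lq lenr kle by simp
        then have IH: "real (length q) \<le> K * 2 ^ (lab T q)" using less.IH qpos by blast
        have "K * 2 ^ (lab T q) \<le> K * 2 ^ (j - 1)"
          using lqj K_def c'0 by (intro mult_left_mono power_increasing) auto
        with IH seg lq have "real (length p) \<le> K * 2 ^ (j - 1) + 1 + c' * (2 ^ j + 1)"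
          by simp
        also have "\<dots> \<le> K * 2 ^ j" unfolding K_def pj using aux1[OF c'0 x1] .
        finally show ?thesis using j_def by simp
      qed
    qed
    show "\<forall>p\<in>positions T. real (length p) \<le> K * 2 ^ (lab T p)" using main by blast
  qed
qed

end
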